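(* Let $G$ be an $\alpha_i$-metric graph ($i\ge 0$ an integer). For any vertices $x,y,v$ and any integer $k\in\{0,\dots,d(x,y)\}$, there is a vertex $c\in S_k(x,y)$ such that $d(v,c)\le \max\{d(v,x),d(v,y)\}-\min\{d(x,c),d(y,c)\}+i$ and $d(v,c)\le\max\{d(v,x),d(v,y)\}+i/2$. For an arbitrary vertex $z\in I(x,y)$, we have $d(z,v)\le \max\{d(x,v),d(y,v)\}-\min\{d(x,z),d(y,z)\}+2i+1$ and $d(z,v)\le\max\{d(x,v),d(y,v)\}+3i/2+1$. Furthermore, when $v\in F(z)$, $e(z)\le \max\{e(x),e(y)\}-\min\{d(x,z),d(y,z)\}+2i+1$ and $e(z)\le\max\{e(x),e(y)\}+3i/2+1$.
   Context: All graphs are finite, connected, unweighted, undirected, simple; $d(u,v)$ is the shortest-path distance. $I(u,v)=\{x: d(u,x)+d(x,v)=d(u,v)\}$; the slice is $S_k(u,v)=\{x\in I(u,v): d(u,x)=k\}$. A graph is $\alpha_i$-metric if for all vertices $u,v,w,x$: whenever $v\in I(u,w)$, $w\in I(v,x)$ and $v,w$ are adjacent, then $d(u,x)\ge d(u,v)+d(v,x)-i$. $e(v)=\max_u d(u,v)$ and $F(z)=\{u: d(u,z)=e(z)\}$ is the set of vertices most distant from $z$. *)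

theory Defs
  imports Complex_Main
begin

definition graph :: "'a set \<Rightarrow> ('a \<Rightarrow> 'a \<Rightarrow> bool) \<Rightarrow> bool" where
  "graph V E \<longleftrightarrow> finite V \<and> V \<noteq> {} \<and>
     (\<forall>x y. E x y \<longrightarrow> x \<in> V \<and> y \<in> V) \<and>
     (\<forall>x y. E x y \<longrightarrow> E y x) \<and> (\<forall>x. \<not> E x x)"

definition walk :: "('a \<Rightarrow> 'a \<Rightarrow> bool) \<Rightarrow> 'a list \<Rightarrow> bool" where
  "walk E xs \<longleftrightarrow> xs \<noteq> [] \<and> (\<forall>j. Suc j < length xs \<longrightarrow> E (xs ! j) (xs ! Suc j))"

definition connected_graph :: "'a set \<Rightarrow> ('a \<Rightarrow> 'a \<Rightarrow> bool) \<Rightarrow> bool" where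
  "connected_graph V E \<longleftrightarrow> graph V E \<and>
     (\<forall>u\<in>V. \<forall>v\<in>V. \<exists>xs. walk E xs \<and> hd xs = u \<and> last xs = v)"

definition dist :: "('a \<Rightarrow> 'a \<Rightarrow> bool) \<Rightarrow> 'a \<Rightarrow> 'a \<Rightarrow> nat" where
  "dist E u v = (LEAST n. \<exists>xs. walk E xs \<and> hd xs = u \<and> last xs = v \<and> length xs = Suc n)"

definition interval :: "'a set \<Rightarrow> ('a \<Rightarrow> 'a \<Rightarrow> bool) \<Rightarrow> 'a \<Rightarrow> 'a \<Rightarrow> 'a set" where
  "interval V E u v = {x \<in> V. dist E u x + dist E x v = dist E u v}"

definition slice :: "'a set \<Rightarrow> ('a \<Rightarrow> 'a \<Rightarrow> bool) \<Rightarrow> nat \<Rightarrow> 'a \<Rightarrow> 'a \<Rightarrow> 'a set" where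
  "slice V E k u v = {x \<in> interval V E u v. dist E u x = k}"

definition alpha_metric :: "nat \<Rightarrow> 'a set \<Rightarrow> ('a \<Rightarrow> 'a \<Rightarrow> bool) \<Rightarrow> bool" where
  "alpha_metric i V E \<longleftrightarrow>
     (\<forall>u\<in>V. \<forall>v\<in>V. \<forall>w\<in>V. \<forall>x\<in>V.
        v \<in> interval V E u w \<and> w \<in> interval V E v x \<and> E v w \<longrightarrow>
        int (dist E u x) \<ge> int (dist E u v) + int (dist E v x) - int i)"

definition ecc :: "'a set \<Rightarrow> ('a \<Rightarrow> 'a \<Rightarrow> bool) \<Rightarrow> 'a \<Rightarrow> nat" where
  "ecc V E v = Max ((\<lambda>u. dist E u v) ` V)"

definition farthest :: "'a set \<Rightarrow> ('a \<Rightarrow> 'a \<Rightarrow> bool) \<Rightarrow> 'a \<Rightarrow> 'a set" where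
  "farthest V E z = {u \<in> V. dist E u z = ecc V E z}"

end

theory Submission
  imports Defs
begin

lemma walk_Cons: "walk E (a # xs) \<longleftrightarrow> xs = [] \<or> (E a (hd xs) \<and> walk E xs)"
proof
  assume w: "walk E (a # xs)"
  have W: "\<And>j. Suc j < length (a#xs) \<Longrightarrow> E ((a#xs)!j) ((a#xs)!Suc j)"
    using w unfolding walk_def by blast
  show "xs = [] \<or> (E a (hd xs) \<and> walk E xs)"
  proof (cases xs)
    case Nil then show ?thesis by simp
  next
    case (Cons b ys)
    have "E a b" using W[of 0] Cons by simp
    moreover have "walk E xs" unfolding walk_def
    proof (intro conjI allI impI)
      show "xs \<noteq> []" using Cons by simp
      fix j assume "Suc j < length xs"
      then have "E ((a#xs) ! Suc j) ((a#xs) ! Suc (Suc j))" using W[of "Suc j"] by simp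
      then show "E (xs ! j) (xs ! Suc j)" by simp
    qed
    ultimately show ?thesis using Cons by simp
  qed
next
  assume h: "xs = [] \<or> (E a (hd xs) \<and> walk E xs)"
  show "walk E (a # xs)" unfolding walk_def
  proof (intro conjI allI impI)
    show "a # xs \<noteq> []" by simp
    fix j assume j: "Suc j < length (a # xs)"
    then have ne: "xs \<noteq> []" by auto
    then have hw: "E a (hd xs)" "walk E xs" using h by auto
    show "E ((a # xs) ! j) ((a # xs) ! Suc j)"
    proof (cases j)
      case 0 then show ?thesis using hw(1) ne by (simp add: hd_conv_nth)
    next
      case (Suc j')
      have "Suc j' < length xs" using j Suc by simp
      then have "E (xs ! j') (xs ! Suc j')" using hw(2) unfolding walk_def by blast
      then show ?thesis using Suc by simp
    qed
  qed
qed

lemma walk_append: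
  assumes "walk E xs" "walk E ys" "last xs = hd ys"
  shows "walk E (xs @ tl ys)"
  using assms
proof (induction xs)
  case Nil then show ?case by (simp add: walk_def)
next
  case (Cons a xs)
  show ?case
  proof (cases xs)
    case Nil
    have "ys \<noteq> []" using Cons.prems(2) by (simp add: walk_def)
    then have "(a # xs) @ tl ys = ys" using Cons.prems(3) Nil by (cases ys) auto
    then show ?thesis using Cons.prems(2) by simp
  next
    fix b zs assume Cons2: "xs = b # zs"
    have "walk E xs" "E a (hd xs)" using Cons.prems(1) Cons2 by (auto simp: walk_Cons)
    moreover have "last xs = hd ys" using Cons.prems(3) Cons2 by simp
    ultimately have "walk E (xs @ tl ys)" using Cons.IH Cons.prems(2) by blast
    then show ?thesis using \<open>E a (hd xs)\<close> Cons2 by (simp add: walk_Cons)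
  qed
qed

lemma walk_rev:
  assumes "walk E xs" "\<forall>x y. E x y \<longrightarrow> E y x"
  shows "walk E (rev xs)"
  unfolding walk_def
proof (intro conjI allI impI)
  show "rev xs \<noteq> []" using assms(1) by (simp add: walk_def)
  fix j assume j: "Suc j < length (rev xs)"
  let ?n = "length xs"
  have jj: "Suc (?n - Suc (Suc j)) < ?n" using j by simp
  have "E (xs ! (?n - Suc (Suc j))) (xs ! Suc (?n - Suc (Suc j)))"
    using assms(1) jj unfolding walk_def by blast
  moreover have "Suc (?n - Suc (Suc j)) = ?n - Suc j" using j by simp
  ultimately have "E (xs ! (?n - Suc (Suc j))) (xs ! (?n - Suc j))" by simp
  then have "E (xs ! (?n - Suc j)) (xs ! (?n - Suc (Suc j)))" using assms(2) by blast
  then show "E (rev xs ! j) (rev xs ! Suc j)" using j by (simp add: rev_nth)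
qed

lemma dist_le:
  assumes "walk E xs" "hd xs = u" "last xs = v"
  shows "dist E u v \<le> length xs - 1"
proof -
  have "length xs = Suc (length xs - 1)" using assms(1) by (cases xs) (auto simp: walk_def)
  then show ?thesis unfolding dist_def using assms by (intro Least_le) blast
qed

lemma walk_ex:
  assumes "connected_graph V E" "u \<in> V" "v \<in> V"
  shows "\<exists>xs. walk E xs \<and> hd xs = u \<and> last xs = v \<and> length xs = Suc (dist E u v)"
proof -
  obtain xs where xs: "walk E xs" "hd xs = u" "last xs = v"
    using assms unfolding connected_graph_def by blast
  have "length xs = Suc (length xs - 1)" using xs(1) by (cases xs) (auto simp: walk_def)
  then have "\<exists>n xs. walk E xs \<and> hd xs = u \<and> last xs = v \<and> length xs = Suc n" using xs by blast
  from LeastI_ex[OF this] show ?thesis unfolding dist_def by blast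
qed

lemma dist_tri:
  assumes G: "connected_graph V E" and "u \<in> V" "v \<in> V" "w \<in> V"
  shows "dist E u w \<le> dist E u v + dist E v w"
proof -
  obtain xs where xs: "walk E xs" "hd xs = u" "last xs = v" "length xs = Suc (dist E u v)"
    using walk_ex[OF G assms(2,3)] by blast
  obtain ys where ys: "walk E ys" "hd ys = v" "last ys = w" "length ys = Suc (dist E v w)"
    using walk_ex[OF G assms(3,4)] by blast
  have "walk E (xs @ tl ys)" using walk_append xs ys by metis
  moreover have "hd (xs @ tl ys) = u" using xs by (cases xs) auto
  moreover have "last (xs @ tl ys) = w"
    using xs ys by (cases ys) (auto simp: last_append)
  ultimately have "dist E u w \<le> length (xs @ tl ys) - 1" by (rule dist_le)
  then show ?thesis using xs ys by simp
qed

lemma dist_sym: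
  assumes G: "connected_graph V E" and "u \<in> V" "v \<in> V"
  shows "dist E u v = dist E v u"
proof -
  have sy: "\<forall>x y. E x y \<longrightarrow> E y x" using G unfolding connected_graph_def graph_def by blast
  have le: "dist E b a \<le> dist E a b" if aV: "a \<in> V" and bV: "b \<in> V" for a b
  proof -
    obtain xs where xs: "walk E xs" "hd xs = a" "last xs = b" "length xs = Suc (dist E a b)"
      using walk_ex[OF G aV bV] by blast
    have "walk E (rev xs)" using walk_rev[OF xs(1) sy] .
    moreover have "hd (rev xs) = b" "last (rev xs) = a" using xs(1,2,3)
      by (auto simp: walk_def hd_rev last_rev)
    ultimately have "dist E b a \<le> length (rev xs) - 1" by (rule dist_le)
    then show ?thesis using xs by simp
  qed
  show ?thesis using le[OF assms(2,3)] le[OF assms(3,2)] by simp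
qed

lemma dist_self: "dist E u u = 0"
proof -
  have "walk E [u]" by (simp add: walk_def)
  then have "dist E u u \<le> length [u] - 1" by (rule dist_le) auto
  then show ?thesis by simp
qed

lemma dist_0:
  assumes G: "connected_graph V E" and "u \<in> V" "v \<in> V" "dist E u v = 0"
  shows "u = v"
proof -
  obtain xs where xs: "walk E xs" "hd xs = u" "last xs = v" "length xs = Suc (dist E u v)"
    using walk_ex[OF G assms(2,3)] by blast
  then show ?thesis using assms(4) by (cases xs) auto
qed

lemma dist_edge:
  assumes G: "connected_graph V E" and "E u v"
  shows "dist E u v = 1" "u \<in> V" "v \<in> V"
proof -
  show uv: "u \<in> V" "v \<in> V" using G assms(2) unfolding connected_graph_def graph_def by blast+
  have "walk E [u, v]" using assms(2) by (simp add: walk_Cons walk_def)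
  then have "dist E u v \<le> length [u,v] - 1" by (rule dist_le) auto
  moreover have "u \<noteq> v" using G assms(2) unfolding connected_graph_def graph_def by blast
  ultimately show "dist E u v = 1" using dist_0[OF G uv] by fastforce
qed

lemma dist_step:
  assumes G: "connected_graph V E" and "u \<in> V" "v \<in> V" "dist E u v = Suc n"
  shows "\<exists>w. E u w \<and> dist E w v = n"
proof -
  have gr: "graph V E" using G unfolding connected_graph_def by blast
  obtain xs where xs: "walk E xs" "hd xs = u" "last xs = v" "length xs = Suc (dist E u v)"
    using walk_ex[OF G assms(2,3)] by blast
  obtain a ys where ys0: "xs = a # ys" using xs(4) by (cases xs) auto
  have ys: "xs = a # ys" "ys \<noteq> []" using ys0 xs(4) assms(4) by auto
  have w: "E u (hd ys)" "walk E ys" using xs ys by (auto simp: walk_Cons)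
  have "dist E (hd ys) v \<le> length ys - 1" using dist_le[OF w(2)] xs ys by simp
  then have le: "dist E (hd ys) v \<le> n" using xs ys assms(4) by simp
  have hv: "hd ys \<in> V" using dist_edge(3)[OF G w(1)] .
  have "dist E u v \<le> dist E u (hd ys) + dist E (hd ys) v" using dist_tri[OF G assms(2) hv assms(3)] .
  then have "dist E (hd ys) v \<ge> n" using dist_edge(1)[OF G w(1)] assms(4) by simp
  then show ?thesis using le w(1) by (intro exI[of _ "hd ys"]) simp
qed

lemma alphaD:
  assumes am: "alpha_metric i V E" and "u \<in> V" "p \<in> V" "q \<in> V" "t \<in> V"
    and "dist E u q = dist E u p + 1" "dist E p t = dist E q t + 1" "E p q" "dist E p q = 1"
  shows "dist E u p + dist E p t \<le> dist E u t + i"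
proof -
  have A: "p \<in> interval V E u q" "q \<in> interval V E p t" using assms unfolding interval_def by auto
  have "int (dist E u t) \<ge> int (dist E u p) + int (dist E p t) - int i"
    by (rule am[unfolded alpha_metric_def, rule_format]) (use assms A in simp_all)
  then show ?thesis by simp
qed

lemma slice_ex:
  assumes G: "connected_graph V E" and xV: "x \<in> V" and yV: "y \<in> V"
  shows "k \<le> dist E x y \<Longrightarrow> \<exists>c\<in>V. dist E x c = k \<and> dist E x c + dist E c y = dist E x y"
proof (induction k)
  case 0 then show ?case using xV dist_self[of E x] by auto
next
  case (Suc k)
  then obtain c where c: "c \<in> V" "dist E x c = k" "dist E x c + dist E c y = dist E x y" by auto
  then obtain r where r: "dist E c y = Suc r" using Suc.prems by (cases "dist E c y") auto
  then obtain w where w: "E c w" "dist E w y = r" using dist_step[OF G c(1) yV] by blast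
  have wV: "w \<in> V" and cw: "dist E c w = 1" using dist_edge[OF G w(1)] by auto
  have "dist E x w \<le> dist E x c + dist E c w" using dist_tri[OF G xV c(1) wV] .
  moreover have "dist E x y \<le> dist E x w + dist E w y" using dist_tri[OF G xV wV yV] .
  ultimately have "dist E x w = Suc k" "dist E x w + dist E w y = dist E x y"
    using c r w cw by linarith+
  then show ?case using wV by blast
qed

lemma claim1:
  assumes G: "connected_graph V E" and am: "alpha_metric i V E"
    and xV: "x \<in> V" and yV: "y \<in> V" and vV: "v \<in> V" and k: "k \<le> dist E x y"
  shows "\<exists>c\<in>V. dist E x c = k \<and> dist E x c + dist E c y = dist E x y \<and>
    (dist E v c + dist E c x \<le> dist E v x + i \<or> dist E v c + dist E c y \<le> dist E v y + i)"
proof -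
  define P where "P r \<longleftrightarrow> (\<exists>c\<in>V. dist E x c = k \<and> dist E x c + dist E c y = dist E x y \<and> dist E v c = r)" for r
  obtain c0 where "c0\<in>V" "dist E x c0 = k" "dist E x c0 + dist E c0 y = dist E x y"
    using slice_ex[OF G xV yV k] by blast
  then have "P (dist E v c0)" unfolding P_def by blast
  then have "P (LEAST r. P r)" by (rule LeastI)
  then obtain c where c: "c\<in>V" "dist E x c = k" "dist E x c + dist E c y = dist E x y"
    and cmin: "dist E v c = (LEAST r. P r)" unfolding P_def by blast
  have minc: "dist E v c \<le> dist E v w" if "w \<in> V" "dist E x w = k" "dist E x w + dist E w y = dist E x y" for w
  proof -
    have "P (dist E v w)" unfolding P_def using that by blast
    then have "(LEAST r. P r) \<le> dist E v w" by (rule Least_le)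
    then show ?thesis using cmin by simp
  qed
  show ?thesis
  proof (cases "dist E c v")
    case 0
    then have "c = v" using dist_0[OF G c(1) vV] by simp
    then have "dist E v c + dist E c x \<le> dist E v x + i" using dist_self[of E v] by simp
    then show ?thesis using c by (intro bexI[of _ c]) simp_all
  next
    case (Suc r)
    obtain w where w: "E c w" "dist E w v = r" using dist_step[OF G c(1) vV Suc] by blast
    have wV: "w \<in> V" and cw: "dist E c w = 1" using dist_edge[OF G w(1)] by auto
    have vc: "dist E v c = dist E c v" using dist_sym[OF G vV c(1)] .
    have vw: "dist E v w = dist E w v" using dist_sym[OF G vV wV] .
    have vx: "dist E v x = dist E x v" using dist_sym[OF G vV xV] .
    have vy: "dist E v y = dist E y v" using dist_sym[OF G vV yV] .
    have cx: "dist E c x = dist E x c" using dist_sym[OF G c(1) xV] .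
    have cy: "dist E c y = dist E y c" using dist_sym[OF G c(1) yV] .
    have wy: "dist E w y = dist E y w" using dist_sym[OF G wV yV] .
    have wc: "dist E w c = dist E c w" using dist_sym[OF G wV c(1)] .
    have t1: "dist E x w \<le> dist E x c + 1"
      using dist_tri[OF G xV c(1) wV] cw by linarith
    have t2: "dist E w y \<le> 1 + dist E c y"
      using dist_tri[OF G wV c(1) yV] cw wc by linarith
    have t3: "dist E x y \<le> dist E x w + dist E w y"
      using dist_tri[OF G xV wV yV] .
    have e: "dist E c v = dist E w v + 1" using Suc w(2) by linarith
    show ?thesis
    proof (cases "dist E x w = dist E x c + 1")
      case True
      have "dist E x c + dist E c v \<le> dist E x v + i"
        using alphaD[OF am xV c(1) wV vV True e w(1) cw] .
      then have "dist E v c + dist E c x \<le> dist E v x + i" using vc cx vx by linarith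
      then show ?thesis using c by (intro bexI[of _ c]) simp_all
    next
      case F1: False
      show ?thesis
      proof (cases "dist E y w = dist E y c + 1")
        case True
        have "dist E y c + dist E c v \<le> dist E y v + i"
          using alphaD[OF am yV c(1) wV vV True e w(1) cw] .
        then have "dist E v c + dist E c y \<le> dist E v y + i" using vc cy vy by linarith
        then show ?thesis using c by (intro bexI[of _ c]) simp_all
      next
        case False
        have f2: "dist E w y \<le> dist E c y" using False t2 wy cy by linarith
        have f1: "dist E x w \<le> dist E x c" using F1 t1 by linarith
        have "dist E x w = k" using f1 f2 t3 c(2,3) by linarith
        moreover have "dist E x w + dist E w y = dist E x y" using f1 f2 t3 c(3) by linarith
        ultimately have "dist E v c \<le> dist E v w" using minc wV by blast
        then show ?thesis using vc vw Suc w(2) by linarith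
      qed
    qed
  qed
qed

lemma thin:
  assumes G: "connected_graph V E" and am: "alpha_metric i V E"
    and xV: "x \<in> V" and yV: "y \<in> V"
  shows "z \<in> V \<Longrightarrow> c \<in> V \<Longrightarrow> dist E z y = r \<Longrightarrow> dist E x z + dist E z y = dist E x y \<Longrightarrow>
    dist E x c + dist E c y = dist E x y \<Longrightarrow> dist E x z = dist E x c \<Longrightarrow> dist E z c \<le> i + 1"
proof (induction r arbitrary: z c)
  case 0
  then have "dist E z y = 0" "dist E c y = 0" by linarith+
  then have "z = y" "c = y" using dist_0[OF G _ yV] 0(1,2) by blast+
  then show ?case using dist_self[of E y] by simp
next
  case (Suc r)
  note zV = Suc.prems(1) and cV = Suc.prems(2)
  have zy: "dist E z y = Suc r" using Suc.prems(3) .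
  have cy: "dist E c y = Suc r" using Suc.prems(3-6) by linarith
  obtain z' where z': "E z z'" "dist E z' y = r" using dist_step[OF G zV yV zy] by blast
  obtain c' where c': "E c c'" "dist E c' y = r" using dist_step[OF G cV yV cy] by blast
  have z'V: "z' \<in> V" and zz': "dist E z z' = 1" using dist_edge[OF G z'(1)] by auto
  have c'V: "c' \<in> V" and cc': "dist E c c' = 1" using dist_edge[OF G c'(1)] by auto
  have sy: "\<And>a b. E a b \<Longrightarrow> E b a" using G unfolding connected_graph_def graph_def by blast
  have z'z: "E z' z" using sy[OF z'(1)] .
  have c'c: "E c' c" using sy[OF c'(1)] .
  note s = dist_sym[OF G cV zV] dist_sym[OF G c'V zV] dist_sym[OF G c'V z'V] dist_sym[OF G cV xV]
        dist_sym[OF G c'V xV] dist_sym[OF G zV xV] dist_sym[OF G z'V xV] dist_sym[OF G c'V cV]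
        dist_sym[OF G z'V zV]
  have xz': "dist E x z' = dist E x z + 1"
    using dist_tri[OF G xV zV z'V] dist_tri[OF G xV z'V yV] zz' z'(2) Suc.prems(3,4) by linarith
  have xc': "dist E x c' = dist E x z + 1"
    using dist_tri[OF G xV cV c'V] dist_tri[OF G xV c'V yV] cc' c'(2) cy Suc.prems(5,6) by linarith
  have IH: "dist E z' c' \<le> i + 1"
  proof (rule Suc.IH[OF z'V c'V z'(2)])
    show "dist E x z' + dist E z' y = dist E x y" using xz' z'(2) Suc.prems(3,4) by linarith
    show "dist E x c' + dist E c' y = dist E x y" using xc' c'(2) Suc.prems(3,4) by linarith
    show "dist E x z' = dist E x c'" using xz' xc' by linarith
  qed
  show ?case
  proof (rule ccontr)
    assume "\<not> dist E z c \<le> i + 1"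
    then have big: "dist E z c \<ge> i + 2" by simp
    have t: "dist E z c' \<le> dist E z c + 1" "dist E z c \<le> dist E z c' + 1"
      "dist E z' c' \<le> dist E z c' + 1" "dist E z c' \<le> dist E z' c' + 1"
      using dist_tri[OF G zV cV c'V] dist_tri[OF G zV c'V cV] dist_tri[OF G z'V zV c'V]
        dist_tri[OF G zV z'V c'V] s zz' cc' by linarith+
    have "dist E z c' \<noteq> dist E z c + 1"
    proof
      assume h: "dist E z c' = dist E z c + 1"
      have e: "dist E c y = dist E c' y + 1" using cy c'(2) by linarith
      have "dist E z c + dist E c y \<le> dist E z y + i"
        using alphaD[OF am zV cV c'V yV h e c'(1) cc'] .
      then show False using big cy zy by linarith
    qed
    moreover have "dist E z c \<noteq> dist E z c' + 1"
    proof
      assume h: "dist E z c = dist E z c' + 1"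
      have e: "dist E c' x = dist E c x + 1" using s xc' Suc.prems(6) by linarith
      have cc1: "dist E c' c = 1" using s cc' by linarith
      have "dist E z c' + dist E c' x \<le> dist E z x + i"
        using alphaD[OF am zV c'V cV xV h e c'c cc1] .
      then show False using big h s xc' by linarith
    qed
    ultimately have zc': "dist E z c' = dist E z c" using t by linarith
    have "dist E z' c' \<noteq> dist E z c' + 1"
    proof
      assume h: "dist E z' c' = dist E z c' + 1"
      have h': "dist E c' z' = dist E c' z + 1" using h s by linarith
      have e: "dist E z y = dist E z' y + 1" using zy z'(2) by linarith
      have "dist E c' z + dist E z y \<le> dist E c' y + i"
        using alphaD[OF am c'V zV z'V yV h' e z'(1) zz'] .
      then show False using big zc' s c'(2) zy by linarith
    qed
    moreover have "dist E z c' \<noteq> dist E z' c' + 1"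
    proof
      assume h: "dist E z c' = dist E z' c' + 1"
      have h': "dist E c' z = dist E c' z' + 1" using h s by linarith
      have e: "dist E z' x = dist E z x + 1" using s xz' by linarith
      have zz1: "dist E z' z = 1" using s zz' by linarith
      have "dist E c' z' + dist E z' x \<le> dist E c' x + i"
        using alphaD[OF am c'V z'V zV xV h' e z'z zz1] .
      then show False using big zc' s xz' xc' h by linarith
    qed
    ultimately have "dist E z' c' = dist E z c" using t zc' by linarith
    then show False using IH big by simp
  qed
qed

lemma bounds_real:
  fixes A X Y cx cy i :: nat
  assumes "A + cx \<le> X + i \<or> A + cy \<le> Y + i" "A \<le> X + cx" "A \<le> Y + cy"
  shows "real A \<le> real (max X Y) - real (min cx cy) + real i \<and> real A \<le> real (max X Y) + real i / 2"
proof -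
  have m: "real X \<le> real (max X Y)" "real Y \<le> real (max X Y)"
    "real (min cx cy) \<le> real cx" "real (min cx cy) \<le> real cy" by simp_all
  have r: "real A \<le> real X + real cx" "real A \<le> real Y + real cy" using assms(2,3) by simp_all
  from assms(1) show ?thesis
  proof
    assume "A + cx \<le> X + i"
    then have "real A + real cx \<le> real X + real i" by simp
    then show ?thesis using m r by linarith
  next
    assume "A + cy \<le> Y + i"
    then have "real A + real cy \<le> real Y + real i" by simp
    then show ?thesis using m r by linarith
  qed
qed

lemma ecc_ge:
  assumes G: "connected_graph V E" and "v \<in> V"
  shows "dist E v x \<le> ecc V E x"
proof -
  have "finite V" using G unfolding connected_graph_def graph_def by blast
  then show ?thesis unfolding ecc_def using assms(2) by (intro Max_ge) auto
qed

theorem lemma4: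
  fixes V :: "'a set" and E :: "'a \<Rightarrow> 'a \<Rightarrow> bool" and i :: nat
  assumes G: "connected_graph V E"
    and am: "alpha_metric i V E"
    and xV: "x \<in> V" and yV: "y \<in> V" and vV: "v \<in> V"
  shows "(\<forall>k \<le> dist E x y. \<exists>c \<in> slice V E k x y.
            real (dist E v c) \<le> real (max (dist E v x) (dist E v y))
                                 - real (min (dist E x c) (dist E y c)) + real i
          \<and> real (dist E v c) \<le> real (max (dist E v x) (dist E v y)) + real i / 2)
       \<and> (\<forall>z \<in> interval V E x y.
            real (dist E z v) \<le> real (max (dist E x v) (dist E y v))
                                 - real (min (dist E x z) (dist E y z)) + 2 * real i + 1
          \<and> real (dist E z v) \<le> real (max (dist E x v) (dist E y v)) + 3 * real i / 2 + 1
          \<and> (v \<in> farthest V E z \<longrightarrow>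
               real (ecc V E z) \<le> real (max (ecc V E x) (ecc V E y))
                                    - real (min (dist E x z) (dist E y z)) + 2 * real i + 1
             \<and> real (ecc V E z) \<le> real (max (ecc V E x) (ecc V E y)) + 3 * real i / 2 + 1))"
proof (intro conjI)
  show "\<forall>k \<le> dist E x y. \<exists>c \<in> slice V E k x y.
            real (dist E v c) \<le> real (max (dist E v x) (dist E v y))
                                 - real (min (dist E x c) (dist E y c)) + real i
          \<and> real (dist E v c) \<le> real (max (dist E v x) (dist E v y)) + real i / 2"
  proof (intro allI impI)
    fix k assume k: "k \<le> dist E x y"
    obtain c where c: "c \<in> V" "dist E x c = k" "dist E x c + dist E c y = dist E x y"
      and h: "dist E v c + dist E c x \<le> dist E v x + i \<or> dist E v c + dist E c y \<le> dist E v y + i"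
      using claim1[OF G am xV yV vV k] by blast
    have cx: "dist E c x = dist E x c" using dist_sym[OF G c(1) xV] .
    have cy: "dist E c y = dist E y c" using dist_sym[OF G c(1) yV] .
    have h': "dist E v c + dist E x c \<le> dist E v x + i \<or> dist E v c + dist E y c \<le> dist E v y + i"
      using h cx cy by simp
    have "dist E v c \<le> dist E v x + dist E x c" using dist_tri[OF G vV xV c(1)] .
    moreover have "dist E v c \<le> dist E v y + dist E y c" using dist_tri[OF G vV yV c(1)] .
    ultimately have b: "real (dist E v c) \<le> real (max (dist E v x) (dist E v y))
                                 - real (min (dist E x c) (dist E y c)) + real i
          \<and> real (dist E v c) \<le> real (max (dist E v x) (dist E v y)) + real i / 2"
      using bounds_real[OF h'] by blast
    have "c \<in> slice V E k x y" unfolding slice_def interval_def using c by simp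
    then show "\<exists>c \<in> slice V E k x y.
            real (dist E v c) \<le> real (max (dist E v x) (dist E v y))
                                 - real (min (dist E x c) (dist E y c)) + real i
          \<and> real (dist E v c) \<le> real (max (dist E v x) (dist E v y)) + real i / 2"
      using b by blast
  qed
next
  show "\<forall>z \<in> interval V E x y.
            real (dist E z v) \<le> real (max (dist E x v) (dist E y v))
                                 - real (min (dist E x z) (dist E y z)) + 2 * real i + 1
          \<and> real (dist E z v) \<le> real (max (dist E x v) (dist E y v)) + 3 * real i / 2 + 1
          \<and> (v \<in> farthest V E z \<longrightarrow>
               real (ecc V E z) \<le> real (max (ecc V E x) (ecc V E y))
                                    - real (min (dist E x z) (dist E y z)) + 2 * real i + 1
             \<and> real (ecc V E z) \<le> real (max (ecc V E x) (ecc V E y)) + 3 * real i / 2 + 1)"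
  proof
    fix z assume "z \<in> interval V E x y"
    then have zV: "z \<in> V" and zI: "dist E x z + dist E z y = dist E x y"
      unfolding interval_def by auto
    have k: "dist E x z \<le> dist E x y" using zI by linarith
    obtain c where c: "c \<in> V" "dist E x c = dist E x z" "dist E x c + dist E c y = dist E x y"
      and h: "dist E v c + dist E c x \<le> dist E v x + i \<or> dist E v c + dist E c y \<le> dist E v y + i"
      using claim1[OF G am xV yV vV k] by blast
    have cx: "dist E c x = dist E x c" using dist_sym[OF G c(1) xV] .
    have cy: "dist E c y = dist E y c" using dist_sym[OF G c(1) yV] .
    have zy: "dist E z y = dist E y z" using dist_sym[OF G zV yV] .
    have vx: "dist E v x = dist E x v" using dist_sym[OF G vV xV] .
    have vy: "dist E v y = dist E y v" using dist_sym[OF G vV yV] .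
    have vc: "dist E v c = dist E c v" using dist_sym[OF G vV c(1)] .
    have h': "dist E v c + dist E x c \<le> dist E v x + i \<or> dist E v c + dist E y c \<le> dist E v y + i"
      using h cx cy by simp
    have "dist E v c \<le> dist E v x + dist E x c" using dist_tri[OF G vV xV c(1)] .
    moreover have "dist E v c \<le> dist E v y + dist E y c" using dist_tri[OF G vV yV c(1)] .
    ultimately have b: "real (dist E v c) \<le> real (max (dist E v x) (dist E v y))
                                 - real (min (dist E x c) (dist E y c)) + real i
          \<and> real (dist E v c) \<le> real (max (dist E v x) (dist E v y)) + real i / 2"
      using bounds_real[OF h'] by blast
    have th: "dist E z c \<le> i + 1"
      using thin[OF G am xV yV zV c(1) refl zI c(3)] c(2) by simp
    have tz: "dist E z v \<le> dist E z c + dist E c v" using dist_tri[OF G zV c(1) vV] .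
    have mn: "min (dist E x z) (dist E y z) = min (dist E x c) (dist E y c)"
      using c(2,3) zI cy zy by simp
    have mx: "max (dist E x v) (dist E y v) = max (dist E v x) (dist E v y)" using vx vy by simp
    have th': "real (dist E z v) \<le> real (dist E v c) + real i + 1"
      using th tz vc by simp
    have B1: "real (dist E z v) \<le> real (max (dist E x v) (dist E y v))
                                 - real (min (dist E x z) (dist E y z)) + 2 * real i + 1"
      using b th' mn mx by simp
    have B2: "real (dist E z v) \<le> real (max (dist E x v) (dist E y v)) + 3 * real i / 2 + 1"
      using b th' mx by simp
    have B3: "v \<in> farthest V E z \<longrightarrow>
               real (ecc V E z) \<le> real (max (ecc V E x) (ecc V E y))
                                    - real (min (dist E x z) (dist E y z)) + 2 * real i + 1
             \<and> real (ecc V E z) \<le> real (max (ecc V E x) (ecc V E y)) + 3 * real i / 2 + 1"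
    proof
      assume "v \<in> farthest V E z"
      then have "dist E v z = ecc V E z" unfolding farthest_def by simp
      then have ez: "ecc V E z = dist E z v" using dist_sym[OF G vV zV] by simp
      have "dist E v x \<le> ecc V E x" "dist E v y \<le> ecc V E y"
        using ecc_ge[OF G vV] by blast+
      then have "max (dist E x v) (dist E y v) \<le> max (ecc V E x) (ecc V E y)" using vx vy by (intro max.mono) simp_all
      then have "real (max (dist E x v) (dist E y v)) \<le> real (max (ecc V E x) (ecc V E y))"
        by (simp only: of_nat_le_iff)
      then show "real (ecc V E z) \<le> real (max (ecc V E x) (ecc V E y))
                                    - real (min (dist E x z) (dist E y z)) + 2 * real i + 1
             \<and> real (ecc V E z) \<le> real (max (ecc V E x) (ecc V E y)) + 3 * real i / 2 + 1"
        using B1 B2 ez by linarith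
    qed
    show "real (dist E z v) \<le> real (max (dist E x v) (dist E y v))
                                 - real (min (dist E x z) (dist E y z)) + 2 * real i + 1
          \<and> real (dist E z v) \<le> real (max (dist E x v) (dist E y v)) + 3 * real i / 2 + 1
          \<and> (v \<in> farthest V E z \<longrightarrow>
               real (ecc V E z) \<le> real (max (ecc V E x) (ecc V E y))
                                    - real (min (dist E x z) (dist E y z)) + 2 * real i + 1
             \<and> real (ecc V E z) \<le> real (max (ecc V E x) (ecc V E y)) + 3 * real i / 2 + 1)"
      using B1 B2 B3 by blast
  qed
qed

end
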